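(* For every $i\in\{0,1,2\}$, $\mathcal{Z}_2\equiv_{\mathrm{m}}\mathrm{Clo}(d_i)$.
   Context: On $\{0,1,2\}$, define $d_i(x,y,z)=\mathrm{min}(x,y,z)$ if $|\{x,y,z\}|\leq2$ and $d_i(x,y,z)=i$ if $|\{x,y,z\}|=3$, where $\mathrm{min}$ is the minority operation ($\mathrm{min}(x,y,y)=\mathrm{min}(y,x,y)=\mathrm{min}(y,y,x)=x$, and $\mathrm{min}(x,x,x)=x$). $\mathrm{Clo}(d_i)$ is the clone generated by $d_i$. $\mathcal{Z}_2=\mathrm{Pol}(\{0,1\};\{(x,y,z,x-y+z\bmod2)\},\{0\},\{1\})$ is the clone of idempotent affine operations modulo 2 on $\{0,1\}$. For an $n$-ary $f$ and $\sigma\colon[n]\to[r]$, $f_\sigma(x_1,\dots,x_r)=f(x_{\sigma(1)},\dots,x_{\sigma(n)})$; a minion homomorphism is an arity-preserving map $\xi$ between clones with $\xi(f_\sigma)=\xi(f)_\sigma$; $\equiv_{\mathrm{m}}$ means minion homomorphisms exist in both directions. *)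

theory Defs
  imports Main
begin

text \<open>Finitary operations on a carrier A (a set of naturals) are represented as pairs
  (n, f) with n the arity and f :: nat list \<Rightarrow> nat; f is canonicalised to be
  undefined outside A^n (tuples = lists of length n with entries in A).\<close>

type_synonym op = "nat \<times> (nat list \<Rightarrow> nat)"

definition ops :: "nat set \<Rightarrow> op set" where
  "ops A = {(n, f). \<forall>xs. (length xs = n \<and> set xs \<subseteq> A \<longrightarrow> f xs \<in> A)
                        \<and> (\<not> (length xs = n \<and> set xs \<subseteq> A) \<longrightarrow> f xs = undefined)}"

definition mk_op :: "nat set \<Rightarrow> nat \<Rightarrow> (nat list \<Rightarrow> nat) \<Rightarrow> op" where
  "mk_op A n g = (n, \<lambda>xs. if length xs = n \<and> set xs \<subseteq> A then g xs else undefined)"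

definition proj :: "nat set \<Rightarrow> nat \<Rightarrow> nat \<Rightarrow> op" where
  "proj A n k = mk_op A n (\<lambda>xs. xs ! k)"

definition compose :: "nat set \<Rightarrow> nat \<Rightarrow> op \<Rightarrow> op list \<Rightarrow> op" where
  "compose A m f gs = mk_op A m (\<lambda>xs. snd f (map (\<lambda>g. snd g xs) gs))"

inductive_set clo :: "nat set \<Rightarrow> op set \<Rightarrow> op set" for A F where
  clo_proj: "k < n \<Longrightarrow> proj A n k \<in> clo A F"
| clo_gen: "f \<in> F \<Longrightarrow> f \<in> clo A F"
| clo_comp: "\<lbrakk> f \<in> clo A F; fst f = length gs; \<forall>g\<in>set gs. g \<in> clo A F \<and> fst g = m \<rbrakk>
             \<Longrightarrow> compose A m f gs \<in> clo A F"

text \<open>Relations: (arity k, set of k-tuples).\<close>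
type_synonym rel = "nat \<times> nat list set"

definition preserves :: "op \<Rightarrow> rel \<Rightarrow> bool" where
  "preserves f R \<longleftrightarrow> (\<forall>rows. length rows = fst f \<and> set rows \<subseteq> snd R \<longrightarrow>
       map (\<lambda>j. snd f (map (\<lambda>r. r ! j) rows)) [0..<fst R] \<in> snd R)"

definition Pol :: "nat set \<Rightarrow> rel set \<Rightarrow> op set" where
  "Pol B Rs = {f \<in> ops B. \<forall>R\<in>Rs. preserves f R}"

definition affine_rel :: rel where
  "affine_rel = (4, {[x, y, z, nat ((int x - int y + int z) mod 2)] | x y z.
                        x \<in> {0,1} \<and> y \<in> {0,1} \<and> z \<in> {0,1}})"

definition Z2 :: "op set" where
  "Z2 = Pol {0,1} {affine_rel, (1, {[0]}), (1, {[1]})}"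

definition d :: "nat \<Rightarrow> op" where
  "d i = mk_op {0,1,2} 3 (\<lambda>xs. let x = xs ! 0; y = xs ! 1; z = xs ! 2 in
      if card {x, y, z} \<le> 2 then
        (if y = z then x else if x = z then y else z)
      else i)"

text \<open>Minor f_sigma, sigma : [n] \<rightarrow> [r] (0-indexed).\<close>
definition minor :: "nat set \<Rightarrow> op \<Rightarrow> nat \<Rightarrow> (nat \<Rightarrow> nat) \<Rightarrow> op" where
  "minor A f r \<sigma> = mk_op A r (\<lambda>xs. snd f (map (\<lambda>i. xs ! (\<sigma> i)) [0..<fst f]))"

definition minion_hom :: "nat set \<Rightarrow> op set \<Rightarrow> nat set \<Rightarrow> op set \<Rightarrow> (op \<Rightarrow> op) \<Rightarrow> bool" where
  "minion_hom A C B D \<xi> \<longleftrightarrow>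
     (\<forall>f\<in>C. \<xi> f \<in> D \<and> fst (\<xi> f) = fst f) \<and>
     (\<forall>f\<in>C. \<forall>r \<sigma>. (\<forall>i<fst f. \<sigma> i < r) \<longrightarrow> \<xi> (minor A f r \<sigma>) = minor B (\<xi> f) r \<sigma>)"

definition minion_equiv :: "nat set \<Rightarrow> op set \<Rightarrow> nat set \<Rightarrow> op set \<Rightarrow> bool" where
  "minion_equiv A C B D \<longleftrightarrow> (\<exists>\<xi>. minion_hom A C B D \<xi>) \<and> (\<exists>\<xi>. minion_hom B D A C \<xi>)"

end

theory Submission
  imports Defs
begin


abbreviation "A3 \<equiv> {0,1,2::nat}"

definition dd :: "nat \<Rightarrow> nat \<Rightarrow> nat \<Rightarrow> nat \<Rightarrow> nat" where
  "dd i x y z = (if x = y then z else if y = z then x else if x = z then y else i)"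

lemma fst_mk_op[simp]: "fst (mk_op A n g) = n" by (simp add: mk_op_def)
lemma fst_proj[simp]: "fst (proj A n k) = n" by (simp add: proj_def)
lemma fst_compose[simp]: "fst (compose A m f gs) = m" by (simp add: compose_def)
lemma fst_d[simp]: "fst (d i) = 3" by (simp add: d_def)

lemma mk_op_app: "length xs = n \<Longrightarrow> set xs \<subseteq> A \<Longrightarrow> snd (mk_op A n g) xs = g xs"
  by (simp add: mk_op_def)
lemma proj_app: "length xs = n \<Longrightarrow> set xs \<subseteq> A \<Longrightarrow> snd (proj A n k) xs = xs ! k"
  by (simp add: proj_def mk_op_def)
lemma compose_app: "length xs = m \<Longrightarrow> set xs \<subseteq> A \<Longrightarrow>
   snd (compose A m f gs) xs = snd f (map (\<lambda>g. snd g xs) gs)"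
  by (simp add: compose_def mk_op_def)
lemma mk_op_eq: "(\<And>xs. length xs = n \<Longrightarrow> set xs \<subseteq> A \<Longrightarrow> g xs = h xs) \<Longrightarrow> mk_op A n g = mk_op A n h"
  by (auto simp: mk_op_def)

lemma map_projs: "length xs = n \<Longrightarrow> set xs \<subseteq> A \<Longrightarrow>
   map (\<lambda>g. snd g xs) (map (proj A n) js) = map ((!) xs) js"
  by (simp add: proj_app)

lemma d_eval: "x \<in> A3 \<Longrightarrow> y \<in> A3 \<Longrightarrow> z \<in> A3 \<Longrightarrow> snd (d i) [x,y,z] = dd i x y z"
  by (auto simp: d_def mk_op_def dd_def card_insert_if)

lemma projs_in: "(\<forall>j\<in>set js. j < n) \<Longrightarrow> \<forall>g\<in>set (map (proj A n) js). g \<in> clo A F \<and> fst g = n"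
  by (auto intro: clo_proj)



definition par :: "nat list \<Rightarrow> nat \<Rightarrow> bool" where "par ys v = odd (count_list ys v)"
definition res :: "nat \<Rightarrow> bool \<Rightarrow> bool \<Rightarrow> bool \<Rightarrow> nat" where
  "res i p0 p1 p2 = (if p0 \<and> \<not>p1 \<and> \<not>p2 then 0 else if \<not>p0 \<and> p1 \<and> \<not>p2 then 1
      else if \<not>p0 \<and> \<not>p1 \<and> p2 then 2 else i)"
definition sw :: "nat \<Rightarrow> nat \<Rightarrow> nat" where "sw i y = (if y = i then y else 3 - i - y)"
definition Mfun :: "nat \<Rightarrow> nat list \<Rightarrow> nat" where
  "Mfun i ys = res i (par ys 0) (par ys 1) (par ys 2)"
definition Efun :: "nat \<Rightarrow> nat list \<Rightarrow> nat" where
  "Efun i zs = (if par (butlast zs) 0 \<and> par (butlast zs) 1 \<and> par (butlast zs) 2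
     then sw i (last zs) else last zs)"
definition Mop :: "nat \<Rightarrow> nat \<Rightarrow> op" where "Mop i k = mk_op A3 k (Mfun i)"
definition Eop :: "nat \<Rightarrow> nat \<Rightarrow> op" where "Eop i k = mk_op A3 (Suc k) (Efun i)"

lemma count3: "set ys \<subseteq> A3 \<Longrightarrow> count_list ys 0 + count_list ys 1 + count_list ys 2 = length ys"
  by (induction ys) auto

lemma res_in: "i \<in> A3 \<Longrightarrow> res i p0 p1 p2 \<in> A3" by (auto simp: res_def)
lemma sw_in: "i \<in> A3 \<Longrightarrow> y \<in> A3 \<Longrightarrow> sw i y \<in> A3" by (auto simp: sw_def)
lemma Mfun_in: "i \<in> A3 \<Longrightarrow> Mfun i ys \<in> A3" unfolding Mfun_def by (rule res_in)
lemma Efun_in: "i \<in> A3 \<Longrightarrow> zs \<noteq> [] \<Longrightarrow> set zs \<subseteq> A3 \<Longrightarrow> Efun i zs \<in> A3"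
proof -
  assume a: "i \<in> A3" "zs \<noteq> []" "set zs \<subseteq> A3"
  then have l: "last zs \<in> A3" using last_in_set[of zs] by blast
  show ?thesis unfolding Efun_def using sw_in[OF a(1) l] l by simp
qed

lemma absM:
  assumes "p0 = (p1 = p2)" "i = 0 \<or> i = 1 \<or> i = 2" "a = 0 \<or> a = 1 \<or> a = 2" "b = 0 \<or> b = 1 \<or> b = 2"
  shows "res i (p0 \<noteq> odd (count_list [a,b] 0)) (p1 \<noteq> odd (count_list [a,b] 1)) (p2 \<noteq> odd (count_list [a,b] 2))
     = dd i (res i p0 p1 p2)
            (if p0 \<and> p1 \<and> p2 then sw i a else a)
            (if p0 \<and> p1 \<and> p2 then sw i b else b)"
  using assms(2-4) assms(1) apply -
  apply (elim disjE)
  apply (simp_all add: res_def dd_def sw_def Let_def)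
  done

lemma absE:
  assumes "p0 = (p1 = p2)" "i = 0 \<or> i = 1 \<or> i = 2" "a = 0 \<or> a = 1 \<or> a = 2" "b = 0 \<or> b = 1 \<or> b = 2" "y = 0 \<or> y = 1 \<or> y = 2"
  shows "(if (p0 \<noteq> odd (count_list [a,b] 0)) \<and> (p1 \<noteq> odd (count_list [a,b] 1)) \<and> (p2 \<noteq> odd (count_list [a,b] 2))
           then sw i y else y)
     = (let M = res i p0 p1 p2; t = p0 \<and> p1 \<and> p2;
            Ea = (if t then sw i a else a); Eb = (if t then sw i b else b); Ey = (if t then sw i y else y)
        in dd i (dd i M Ea y) (dd i M Eb y) (dd i Ea Eb Ey))"
  using assms(2-5) assms(1) apply -
  apply (elim disjE)
  apply (simp_all add: res_def dd_def sw_def Let_def)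
  done



lemma par_sum: "set ys \<subseteq> A3 \<Longrightarrow> odd (length ys) \<Longrightarrow> par ys 0 = (par ys 1 = par ys 2)"
proof -
  assume a: "set ys \<subseteq> A3" "odd (length ys)"
  then have "odd (count_list ys 0 + count_list ys 1 + count_list ys 2)" using count3[OF a(1)] by simp
  then show ?thesis unfolding par_def by auto
qed

lemma par_app: "par (ys @ zs) v = (par ys v \<noteq> odd (count_list zs v))"
  by (simp only: par_def count_list_append odd_add)

lemma Efun_snoc: "Efun i (ys @ [a]) = (if par ys 0 \<and> par ys 1 \<and> par ys 2 then sw i a else a)"
  by (simp add: Efun_def)

lemma A3_disj: "x \<in> A3 \<Longrightarrow> x = 0 \<or> x = 1 \<or> x = 2" by auto

lemma M_step:
  assumes "i \<in> A3" "set ys \<subseteq> A3" "odd (length ys)" "a \<in> A3" "b \<in> A3"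
  shows "Mfun i (ys @ [a,b]) = dd i (Mfun i ys) (Efun i (ys @ [a])) (Efun i (ys @ [b]))"
  unfolding Mfun_def Efun_snoc par_app
  by (rule absM[OF par_sum[OF assms(2,3)] A3_disj[OF assms(1)] A3_disj[OF assms(4)] A3_disj[OF assms(5)]])

lemma E_step:
  assumes "i \<in> A3" "set ys \<subseteq> A3" "odd (length ys)" "a \<in> A3" "b \<in> A3" "y \<in> A3"
  shows "Efun i (ys @ [a,b,y]) = (let M = Mfun i ys; Ea = Efun i (ys @ [a]); Eb = Efun i (ys @ [b]);
     Ey = Efun i (ys @ [y]) in dd i (dd i M Ea y) (dd i M Eb y) (dd i Ea Eb Ey))"
proof -
  have "Efun i (ys @ [a,b,y]) = Efun i ((ys @ [a,b]) @ [y])" by simp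
  also have "\<dots> = (if par (ys @ [a,b]) 0 \<and> par (ys @ [a,b]) 1 \<and> par (ys @ [a,b]) 2 then sw i y else y)"
    by (rule Efun_snoc)
  also have "\<dots> = (let M = Mfun i ys; Ea = Efun i (ys @ [a]); Eb = Efun i (ys @ [b]);
     Ey = Efun i (ys @ [y]) in dd i (dd i M Ea y) (dd i M Eb y) (dd i Ea Eb Ey))"
    unfolding Mfun_def Efun_snoc par_app
    using absE[OF par_sum[OF assms(2,3)] A3_disj[OF assms(1)] A3_disj[OF assms(4)] A3_disj[OF assms(5)] A3_disj[OF assms(6)]]
    by (simp only: Let_def)
  finally show ?thesis .
qed



lemma map_nth_prefix: "length ys = k \<Longrightarrow> map ((!) (ys @ zs)) [0..<k] = ys"
  by (simp add: list_eq_iff_nth_eq nth_append)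

lemma map_nth_prefix2: "length ys = k \<Longrightarrow> map ((!) (ys @ zs)) ([0..<k] @ [k + j]) = ys @ [zs ! j]"
  by (simp add: map_nth_prefix nth_append)

lemma split_len2: "length xs = k + 2 \<Longrightarrow> \<exists>ys a b. xs = ys @ [a,b] \<and> length ys = k"
proof -
  assume l: "length xs = k + 2"
  then have "length (drop k xs) = Suc (Suc 0)" by simp
  then obtain a b where d: "drop k xs = [a,b]"
    by (metis (no_types, lifting) length_0_conv length_Suc_conv)
  have "xs = take k xs @ [a,b]" using d by (metis append_take_drop_id)
  moreover have "length (take k xs) = k" using l by simp
  ultimately show ?thesis by blast
qed

lemma split_len3: "length xs = k + 3 \<Longrightarrow> \<exists>ys a b y. xs = ys @ [a,b,y] \<and> length ys = k"
proof -
  assume l: "length xs = k + 3"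
  then have "length (drop k xs) = Suc (Suc (Suc 0))" by simp
  then obtain a b y where d: "drop k xs = [a,b,y]"
    by (metis (no_types, lifting) length_0_conv length_Suc_conv)
  have "xs = take k xs @ [a,b,y]" using d by (metis append_take_drop_id)
  moreover have "length (take k xs) = k" using l by simp
  ultimately show ?thesis by blast
qed

lemma Mop1: "Mop i 1 = proj A3 1 0"
  unfolding Mop_def proj_def
proof (rule mk_op_eq)
  fix xs :: "nat list" assume "length xs = 1" "set xs \<subseteq> A3"
  then obtain x where x: "xs = [x]" "x \<in> A3" by (cases xs) auto
  then show "Mfun i xs = xs ! 0" by (auto simp: Mfun_def par_def res_def)
qed

lemma Eop1: "Eop i 1 = proj A3 2 1"
  unfolding Eop_def proj_def Suc_1
proof (rule mk_op_eq)
  fix xs :: "nat list" assume "length xs = 2" "set xs \<subseteq> A3"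
  then obtain x y where x: "xs = [x,y]" "x \<in> A3"
    by (cases xs; cases "tl xs") auto
  then show "Efun i xs = xs ! 1" by (auto simp: Efun_def par_def)
qed

lemma Mop_rec:
  assumes i: "i \<in> A3" and k: "odd k"
  shows "Mop i (k+2) = compose A3 (k+2) (d i)
     [compose A3 (k+2) (Mop i k) (map (proj A3 (k+2)) [0..<k]),
      compose A3 (k+2) (Eop i k) (map (proj A3 (k+2)) ([0..<k] @ [k+0])),
      compose A3 (k+2) (Eop i k) (map (proj A3 (k+2)) ([0..<k] @ [k+1]))]"
  unfolding Mop_def compose_def[of A3 "k+2" "d i"]
proof (rule mk_op_eq)
  fix xs :: "nat list" assume l: "length xs = k + 2" and s: "set xs \<subseteq> A3"
  obtain ys a b where xs: "xs = ys @ [a,b]" and ly: "length ys = k" using split_len2[OF l] by blast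
  have ys: "set ys \<subseteq> A3" and a: "a \<in> A3" and b: "b \<in> A3" using s xs by auto
  have sl: "set (ys @ [a]) \<subseteq> A3" "set (ys @ [b]) \<subseteq> A3" using ys a b by auto
  have e1: "snd (compose A3 (k+2) (mk_op A3 k (Mfun i)) (map (proj A3 (k+2)) [0..<k])) xs = Mfun i ys"
    unfolding compose_app[OF l s] map_projs[OF l s] unfolding xs map_nth_prefix[OF ly] using ys ly by (simp add: mk_op_app)
  have e2: "snd (compose A3 (k+2) (Eop i k) (map (proj A3 (k+2)) ([0..<k] @ [k+0]))) xs = Efun i (ys @ [a])"
    using l s ly ys a unfolding compose_app[OF l s] map_projs[OF l s] unfolding xs map_nth_prefix2[OF ly]
    by (simp add: Eop_def mk_op_app)
  have e3: "snd (compose A3 (k+2) (Eop i k) (map (proj A3 (k+2)) ([0..<k] @ [k+1]))) xs = Efun i (ys @ [b])"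
    using l s ly ys b unfolding compose_app[OF l s] map_projs[OF l s] unfolding xs map_nth_prefix2[OF ly]
    by (simp add: Eop_def mk_op_app)
  show "Mfun i xs = snd (d i) (map (\<lambda>g. snd g xs)
     [compose A3 (k+2) (mk_op A3 k (Mfun i)) (map (proj A3 (k+2)) [0..<k]),
      compose A3 (k+2) (Eop i k) (map (proj A3 (k+2)) ([0..<k] @ [k+0])),
      compose A3 (k+2) (Eop i k) (map (proj A3 (k+2)) ([0..<k] @ [k+1]))])"
    unfolding list.map e1 e2 e3
    using M_step[OF i ys _ a b] ly k d_eval[OF Mfun_in[OF i] Efun_in[OF i _ sl(1)] Efun_in[OF i _ sl(2)]]
    by (simp add: xs)
qed

lemma Eop_rec:
  assumes i: "i \<in> A3" and k: "odd k"
  defines "m \<equiv> Suc (k+2)"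
  defines "Mk \<equiv> compose A3 m (Mop i k) (map (proj A3 m) [0..<k])"
  defines "Ea \<equiv> compose A3 m (Eop i k) (map (proj A3 m) ([0..<k] @ [k+0]))"
  defines "Eb \<equiv> compose A3 m (Eop i k) (map (proj A3 m) ([0..<k] @ [k+1]))"
  defines "Ey \<equiv> compose A3 m (Eop i k) (map (proj A3 m) ([0..<k] @ [k+2]))"
  defines "T1 \<equiv> compose A3 m (d i) [Mk, Ea, proj A3 m (k+2)]"
  defines "T2 \<equiv> compose A3 m (d i) [Mk, Eb, proj A3 m (k+2)]"
  defines "T3 \<equiv> compose A3 m (d i) [Ea, Eb, Ey]"
  shows "Eop i (k+2) = compose A3 m (d i) [T1, T2, T3]"
  unfolding Eop_def compose_def[of A3 m "d i"] m_def[symmetric]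
proof (rule mk_op_eq)
  fix xs :: "nat list" assume l: "length xs = m" and s: "set xs \<subseteq> A3"
  have l': "length xs = k + 3" using l m_def by simp
  obtain ys a b y where xs: "xs = ys @ [a,b,y]" and ly: "length ys = k" using split_len3[OF l'] by blast
  have ys: "set ys \<subseteq> A3" and a: "a \<in> A3" and b: "b \<in> A3" and y: "y \<in> A3" using s xs by auto
  have sl: "set (ys @ [a]) \<subseteq> A3" "set (ys @ [b]) \<subseteq> A3" "set (ys @ [y]) \<subseteq> A3" using ys a b y by auto
  have e1: "snd Mk xs = Mfun i ys"
    unfolding Mk_def compose_app[OF l s] map_projs[OF l s] unfolding xs map_nth_prefix[OF ly] using ys ly by (simp add: mk_op_app Mop_def)
  have e2: "snd Ea xs = Efun i (ys @ [a])"
    using l s ly ys a unfolding Ea_def compose_app[OF l s] map_projs[OF l s] unfolding xs map_nth_prefix2[OF ly]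
    by (simp add: Eop_def mk_op_app)
  have e3: "snd Eb xs = Efun i (ys @ [b])"
    using l s ly ys b unfolding Eb_def compose_app[OF l s] map_projs[OF l s] unfolding xs map_nth_prefix2[OF ly]
    by (simp add: Eop_def mk_op_app)
  have e4: "snd Ey xs = Efun i (ys @ [y])"
    using l s ly ys y unfolding Ey_def compose_app[OF l s] map_projs[OF l s] unfolding xs map_nth_prefix2[OF ly]
    by (simp add: Eop_def mk_op_app)
  have e5: "snd (proj A3 m (k+2)) xs = y" using l s ly by (simp add: proj_app xs nth_append)
  have inM: "Mfun i ys \<in> A3" using Mfun_in[OF i] .
  have inA: "Efun i (ys @ [a]) \<in> A3" "Efun i (ys @ [b]) \<in> A3" "Efun i (ys @ [y]) \<in> A3"
    using Efun_in[OF i _ sl(1)] Efun_in[OF i _ sl(2)] Efun_in[OF i _ sl(3)] by auto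
  have ddin: "dd i u v w \<in> A3" if "u \<in> A3" "v \<in> A3" "w \<in> A3" for u v w
    using that i by (auto simp: dd_def)
  have f1: "snd T1 xs = dd i (Mfun i ys) (Efun i (ys @ [a])) y"
    unfolding T1_def compose_app[OF l s] list.map e1 e2 e5 using d_eval[OF inM inA(1) y] .
  have f2: "snd T2 xs = dd i (Mfun i ys) (Efun i (ys @ [b])) y"
    unfolding T2_def compose_app[OF l s] list.map e1 e3 e5 using d_eval[OF inM inA(2) y] .
  have f3: "snd T3 xs = dd i (Efun i (ys @ [a])) (Efun i (ys @ [b])) (Efun i (ys @ [y]))"
    unfolding T3_def compose_app[OF l s] list.map e2 e3 e4 using d_eval[OF inA] .
  have g: "dd i (Mfun i ys) (Efun i (ys @ [a])) y \<in> A3" "dd i (Mfun i ys) (Efun i (ys @ [b])) y \<in> A3"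
     "dd i (Efun i (ys @ [a])) (Efun i (ys @ [b])) (Efun i (ys @ [y])) \<in> A3"
    using ddin inM inA y by auto
  show "Efun i xs = snd (d i) (map (\<lambda>g. snd g xs) [T1, T2, T3])"
    unfolding list.map f1 f2 f3 d_eval[OF g]
    using E_step[OF i ys _ a b y] ly k by (simp add: xs Let_def)
qed

lemma MEop_clo: "i \<in> A3 \<Longrightarrow> Mop i (2*n+1) \<in> clo A3 {d i} \<and> Eop i (2*n+1) \<in> clo A3 {d i}"
proof (induction n)
  case 0
  have "Mop i 1 \<in> clo A3 {d i}" unfolding Mop1 by (rule clo_proj) simp
  moreover have "Eop i 1 \<in> clo A3 {d i}" unfolding Eop1 by (rule clo_proj) simp
  ultimately show ?case by simp
next
  case (Suc n)
  define k where "k = 2*n+1"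
  have k: "odd k" and k2: "2 * Suc n + 1 = k + 2" unfolding k_def by auto
  have IH: "Mop i k \<in> clo A3 {d i}" "Eop i k \<in> clo A3 {d i}" using Suc unfolding k_def by auto
  have dc: "d i \<in> clo A3 {d i}" by (rule clo_gen) simp
  have pr: "\<And>js m. (\<forall>j\<in>set js. j < m) \<Longrightarrow> \<forall>g\<in>set (map (proj A3 m) js). g \<in> clo A3 {d i} \<and> fst g = m"
    by (rule projs_in)
  have cM: "\<And>m. k < m \<Longrightarrow> compose A3 m (Mop i k) (map (proj A3 m) [0..<k]) \<in> clo A3 {d i}"
    by (rule clo_comp[OF IH(1)]) (auto simp: Mop_def intro: clo_proj)
  have cE: "\<And>m j. k + j < m \<Longrightarrow> compose A3 m (Eop i k) (map (proj A3 m) ([0..<k] @ [k+j])) \<in> clo A3 {d i}"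
    by (rule clo_comp[OF IH(2)]) (auto simp: Eop_def intro: clo_proj)
  have M: "Mop i (k+2) \<in> clo A3 {d i}"
    unfolding Mop_rec[OF Suc.prems k]
    apply (rule clo_comp[OF dc])
     apply simp
    using cM[of "k+2"] cE[of 0 "k+2"] cE[of 1 "k+2"] by simp
  have E: "Eop i (k+2) \<in> clo A3 {d i}"
    unfolding Eop_rec[OF Suc.prems k]
    apply (rule clo_comp[OF dc])
     apply simp
    apply (simp only: list.set ball_simps fst_compose)
    apply (intro conjI clo_comp[OF dc])
    using cM[of "Suc (k+2)"] cE[of 0 "Suc (k+2)"] cE[of 1 "Suc (k+2)"] cE[of 2 "Suc (k+2)"]
    by (auto intro: clo_proj)
  show ?case using M E k2 by simp
qed


abbreviation "B2 \<equiv> {0,1::nat}"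
lemma aff_eq: "nat ((int x - int y + int z) mod 2) = (x + y + z) mod 2"
proof -
  have "(int x - int y + int z) mod 2 = (int x + int y + int z) mod 2"
  proof -
    have "int x + int y + int z = (int x - int y + int z) + 2 * int y" by simp
    then show ?thesis by (metis mod_mult_self2)
  qed
  also have "\<dots> = int ((x + y + z) mod 2)" by (simp add: of_nat_mod)
  finally show ?thesis by simp
qed
lemma aff_mem: "r \<in> snd affine_rel \<longleftrightarrow> (\<exists>x y z. r = [x,y,z,(x+y+z) mod 2] \<and> x \<in> B2 \<and> y \<in> B2 \<and> z \<in> B2)"
  unfolding affine_rel_def aff_eq by auto
lemma Z2_ops: "f \<in> Z2 \<Longrightarrow> f \<in> ops B2" by (simp add: Z2_def Pol_def)

lemma Z2_val: "f \<in> Z2 \<Longrightarrow> length xs = fst f \<Longrightarrow> set xs \<subseteq> B2 \<Longrightarrow> snd f xs \<in> B2"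
  using Z2_ops[of f] unfolding ops_def by (cases f) auto

lemma Z2_pres: "f \<in> Z2 \<Longrightarrow> preserves f affine_rel \<and> preserves f (1, {[0]}) \<and> preserves f (1, {[1]})"
  by (simp add: Z2_def Pol_def)lemma upt4: "[0..<4] = [0,1,2,3::nat]" by (simp add: numeral_eq_Suc upt_Suc)
lemma upt1: "[0..<1] = [0::nat]" by simp
lemma fst_aff: "fst affine_rel = 4" by (simp add: affine_rel_def)

lemma Z2_rep: assumes "f \<in> Z2" "x \<in> B2" shows "snd f (replicate (fst f) x) = x"
proof -
  have p: "preserves f (1, {[x]})" using Z2_pres[OF assms(1)] assms(2) by auto
  have "map (\<lambda>j. snd f (map (\<lambda>r. r ! j) (replicate (fst f) [x]))) [0..<fst (1::nat, {[x]})] \<in> snd (1::nat, {[x]})"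
    using p unfolding preserves_def by (elim allE[of _ "replicate (fst f) [x]"]) auto
  then show ?thesis by (simp add: upt1)
qed

lemma Z2_aff:
  assumes f: "f \<in> Z2" and l: "length a = fst f" "length b = fst f" "length c = fst f"
    and s: "set a \<subseteq> B2" "set b \<subseteq> B2" "set c \<subseteq> B2"
  shows "snd f (map (\<lambda>t. (a!t + b!t + c!t) mod 2) [0..<fst f]) = (snd f a + snd f b + snd f c) mod 2"
proof -
  define n where "n = fst f"
  define rows where "rows = map (\<lambda>t. [a!t, b!t, c!t, (a!t + b!t + c!t) mod 2]) [0..<n]"
  have p: "preserves f affine_rel" using Z2_pres[OF f] by simp
  have rs: "set rows \<subseteq> snd affine_rel"
  proof
    fix r assume "r \<in> set rows"
    then obtain t where t: "t < n" "r = [a!t, b!t, c!t, (a!t + b!t + c!t) mod 2]" unfolding rows_def by auto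
    have "a!t \<in> B2" "b!t \<in> B2" "c!t \<in> B2" using s l t(1) n_def nth_mem by (metis subsetD)+
    then show "r \<in> snd affine_rel" unfolding aff_mem t(2) by blast
  qed
  have lr: "length rows = fst f" unfolding rows_def n_def by simp
  have c0: "map (\<lambda>r. r ! 0) rows = a" unfolding rows_def using l n_def by (simp add: list_eq_iff_nth_eq)
  have c1: "map (\<lambda>r. r ! 1) rows = b" unfolding rows_def using l n_def by (simp add: list_eq_iff_nth_eq)
  have c2: "map (\<lambda>r. r ! 2) rows = c" unfolding rows_def using l n_def by (simp add: list_eq_iff_nth_eq)
  have c3: "map (\<lambda>r. r ! 3) rows = map (\<lambda>t. (a!t + b!t + c!t) mod 2) [0..<n]"
    unfolding rows_def by (simp add: list_eq_iff_nth_eq)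
  have "map (\<lambda>j. snd f (map (\<lambda>r. r ! j) rows)) [0..<fst affine_rel] \<in> snd affine_rel"
    using p lr rs unfolding preserves_def by blast
  then have "[snd f a, snd f b, snd f c, snd f (map (\<lambda>t. (a!t + b!t + c!t) mod 2) [0..<n])] \<in> snd affine_rel"
    unfolding fst_aff upt4 list.map c0 c1 c2 c3 .
  then show ?thesis unfolding aff_mem n_def by auto
qed
definition unitv :: "nat \<Rightarrow> nat \<Rightarrow> nat list" where
  "unitv n j = map (\<lambda>t. if t = j then 1 else 0) [0..<n]"

lemma unitv_len[simp]: "length (unitv n j) = n" by (simp add: unitv_def)
lemma unitv_set: "set (unitv n j) \<subseteq> B2" by (auto simp: unitv_def)
lemma unitv_nth: "t < n \<Longrightarrow> unitv n j ! t = (if t = j then 1 else 0)" by (simp add: unitv_def)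

lemma Z2_add:
  assumes f: "f \<in> Z2" and l: "length a = fst f" "length c = fst f" and s: "set a \<subseteq> B2" "set c \<subseteq> B2"
  shows "snd f (map (\<lambda>t. (a!t + c!t) mod 2) [0..<fst f]) = (snd f a + snd f c) mod 2"
proof -
  have e: "map (\<lambda>t. (a!t + replicate (fst f) 0 ! t + c!t) mod 2) [0..<fst f] = map (\<lambda>t. (a!t + c!t) mod 2) [0..<fst f]"
    by (simp add: list_eq_iff_nth_eq)
  have r: "set (replicate (fst f) (0::nat)) \<subseteq> B2" by (cases "fst f") auto
  have z: "snd f (replicate (fst f) 0) = 0" using Z2_rep[OF f, of 0] by simp
  have h: "snd f (map (\<lambda>t. (a!t + replicate (fst f) 0 ! t + c!t) mod 2) [0..<fst f]) = (snd f a + snd f (replicate (fst f) 0) + snd f c) mod 2"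
    by (rule Z2_aff[OF f l(1) _ l(2) s(1) r s(2)]) simp
  show ?thesis using h unfolding e z by simp
qed

lemma Z2_lin:
  assumes f: "f \<in> Z2" and l: "length xs = fst f" and s: "set xs \<subseteq> B2"
  shows "snd f xs = (\<Sum>j<fst f. xs!j * snd f (unitv (fst f) j)) mod 2"
proof -
  define n where "n = fst f"
  define v where "v m = map (\<lambda>t. if t < m then xs!t else 0) [0..<n]" for m
  have sB: "xs!t \<in> B2" if "t < n" for t
  proof -
    have "xs!t \<in> set xs" using that l n_def by simp
    then show ?thesis using s by blast
  qed
  have vl: "length (v m) = fst f" for m unfolding v_def n_def by simp
  have vs: "set (v m) \<subseteq> B2" for m
  proof
    fix x assume "x \<in> set (v m)"
    then obtain t where "t < n" "x = (if t < m then xs!t else 0)" unfolding v_def by auto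
    then show "x \<in> B2" using sB by (cases "t < m") auto
  qed
  have "m \<le> n \<Longrightarrow> snd f (v m) = (\<Sum>j<m. xs!j * snd f (unitv n j)) mod 2" for m
  proof (induction m)
    case 0
    have "v 0 = replicate (fst f) 0" unfolding v_def n_def by (simp add: list_eq_iff_nth_eq)
    then show ?case using Z2_rep[OF f, of 0] by simp
  next
    case (Suc m)
    then have m: "m < n" by simp
    have xm: "xs!m \<in> B2" using sB[OF m] .
    show ?case
    proof (cases "xs!m = 0")
      case True
      have "v (Suc m) = v m" unfolding v_def
      proof (rule map_cong[OF refl])
        fix t assume "t \<in> set [0..<n]"
        show "(if t < Suc m then xs!t else 0) = (if t < m then xs!t else 0)"
          using True by (cases "t = m") (auto simp: less_Suc_eq)
      qed
      then show ?thesis using Suc True by simp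
    next
      case False
      then have x1: "xs!m = 1" using xm by simp
      have "v (Suc m) = map (\<lambda>t. (v m ! t + unitv n m ! t) mod 2) [0..<n]"
        unfolding v_def
      proof (rule map_cong[OF refl])
        fix t assume "t \<in> set [0..<n]"
        then have t: "t < n" by simp
        have vt: "map (\<lambda>t. if t < m then xs ! t else 0) [0..<n] ! t = (if t < m then xs ! t else 0)"
          using t by simp
        show "(if t < Suc m then xs!t else 0) = (map (\<lambda>t. if t < m then xs ! t else 0) [0..<n] ! t + unitv n m ! t) mod 2"
          unfolding vt unitv_nth[OF t]
        proof (cases "t < m")
          case True
          then show "(if t < Suc m then xs!t else 0) = ((if t < m then xs ! t else 0) + (if t = m then 1 else 0)) mod 2"
            using sB[OF t] by auto
        next
          case False
          then show "(if t < Suc m then xs!t else 0) = ((if t < m then xs ! t else 0) + (if t = m then 1 else 0)) mod 2"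
            using x1 by (cases "t = m") auto
        qed
      qed
      then have "snd f (v (Suc m)) = (snd f (v m) + snd f (unitv n m)) mod 2"
        using Z2_add[OF f vl[of m] unitv_len[of "fst f" m] vs[of m] unitv_set[of "fst f" m]] n_def by simp
      also have "\<dots> = ((\<Sum>j<m. xs!j * snd f (unitv n j)) + xs!m * snd f (unitv n m)) mod 2"
        using Suc m x1 by (simp add: mod_add_left_eq)
      finally show ?thesis by simp
    qed
  qed
  then have k: "snd f (v n) = (\<Sum>j<n. xs!j * snd f (unitv n j)) mod 2" by simp
  moreover have "v n = xs" unfolding v_def using l n_def by (simp add: list_eq_iff_nth_eq)
  ultimately show ?thesis using n_def by simp
qed



definition good :: "op \<Rightarrow> bool" where
  "good f \<longleftrightarrow> (\<forall>xs. length xs = fst f \<and> set xs \<subseteq> B2 \<longrightarrow> snd f xs \<in> B2) \<and>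
     (\<forall>x\<in>B2. snd f (replicate (fst f) x) = x) \<and>
     (\<forall>a b c. length a = fst f \<and> length b = fst f \<and> length c = fst f \<and>
        set a \<subseteq> B2 \<and> set b \<subseteq> B2 \<and> set c \<subseteq> B2 \<longrightarrow>
        snd f (map (\<lambda>t. (a!t + b!t + c!t) mod 2) [0..<fst f]) = (snd f a + snd f b + snd f c) mod 2)"

lemma good_rep: assumes "good f" "x \<in> B2" shows "snd f (replicate (fst f) x) = x"
  using bspec[OF conjunct1[OF conjunct2[OF assms(1)[unfolded good_def]]] assms(2)] .

lemma good_val: assumes "good f" "length xs = fst f" "set xs \<subseteq> B2" shows "snd f xs \<in> B2"
proof -
  have "\<forall>xs. length xs = fst f \<and> set xs \<subseteq> B2 \<longrightarrow> snd f xs \<in> B2"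
    by (rule conjunct1[OF assms(1)[unfolded good_def]])
  then show ?thesis using assms(2,3) by blast
qed

lemma good_aff: assumes "good f" "length a = fst f" "length b = fst f" "length c = fst f"
  "set a \<subseteq> B2" "set b \<subseteq> B2" "set c \<subseteq> B2"
  shows "snd f (map (\<lambda>t. (a!t + b!t + c!t) mod 2) [0..<fst f]) = (snd f a + snd f b + snd f c) mod 2"
proof -
  have "\<forall>a b c. length a = fst f \<and> length b = fst f \<and> length c = fst f \<and>
        set a \<subseteq> B2 \<and> set b \<subseteq> B2 \<and> set c \<subseteq> B2 \<longrightarrow>
        snd f (map (\<lambda>t. (a!t + b!t + c!t) mod 2) [0..<fst f]) = (snd f a + snd f b + snd f c) mod 2"
    by (rule conjunct2[OF conjunct2[OF assms(1)[unfolded good_def]]])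
  then show ?thesis using assms(2-7) by blast
qed

lemma nth_sub: "set xs \<subseteq> S \<Longrightarrow> j < length xs \<Longrightarrow> xs!j \<in> S" by (meson nth_mem subsetD)

lemma B2_A3: "set xs \<subseteq> B2 \<Longrightarrow> set xs \<subseteq> A3" by auto

lemma dd_B: "x \<in> B2 \<Longrightarrow> y \<in> B2 \<Longrightarrow> z \<in> B2 \<Longrightarrow> dd i x y z = (x + y + z) mod 2"
  by (auto simp: dd_def)

lemma len3: "length a = 3 \<Longrightarrow> a = [a!0, a!1, a!2]"
proof -
  assume "length a = 3"
  then have "length a = Suc (Suc (Suc 0))" by simp
  then obtain x y z where "a = [x,y,z]" by (metis (no_types, lifting) length_0_conv length_Suc_conv)
  then show ?thesis by simp
qed

lemma aff_set: "set (map (\<lambda>t. (a!t + b!t + c!t) mod 2) [0..<n]) \<subseteq> B2" by auto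

lemma m3: "((x::nat) mod 2 + y mod 2 + z mod 2) mod 2 = (x + y + z) mod 2"
proof -
  have "(x mod 2 + y mod 2 + z mod 2) mod 2 = ((x mod 2 + y mod 2) mod 2 + z mod 2) mod 2"
    by (rule mod_add_left_eq[symmetric])
  also have "\<dots> = ((x + y) mod 2 + z mod 2) mod 2" by (simp only: mod_add_eq)
  also have "\<dots> = (x + y + z) mod 2" by (rule mod_add_eq)
  finally show ?thesis .
qed

lemma dsum: assumes "length a = 3" "set a \<subseteq> B2" shows "snd (d i) a = (a!0 + a!1 + a!2) mod 2"
proof -
  have x: "a = [a!0, a!1, a!2]" by (rule len3) (use assms in simp)
  have m: "a!0 \<in> B2" "a!1 \<in> B2" "a!2 \<in> B2" using assms by - (rule nth_sub; simp)+
  have "snd (d i) a = snd (d i) [a!0, a!1, a!2]" using x by simp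
  also have "\<dots> = dd i (a!0) (a!1) (a!2)" using m by (intro d_eval) auto
  also have "\<dots> = (a!0 + a!1 + a!2) mod 2" using m by (rule dd_B)
  finally show ?thesis .
qed

lemma good_proj: "k < n \<Longrightarrow> good (proj A3 n k)"
  unfolding good_def
proof (intro conjI allI ballI impI)
  assume k: "k < n"
  fix xs assume "length xs = fst (proj A3 n k) \<and> set xs \<subseteq> B2"
  then have "snd (proj A3 n k) xs = xs ! k" using proj_app[of xs n A3 k] by auto
  moreover have "xs ! k \<in> set xs" using k \<open>length xs = fst (proj A3 n k) \<and> set xs \<subseteq> B2\<close> by simp
  ultimately show "snd (proj A3 n k) xs \<in> B2" using \<open>length xs = fst (proj A3 n k) \<and> set xs \<subseteq> B2\<close> by auto
next
  assume k: "k < n"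
  fix x :: nat assume "x \<in> B2"
  then show "snd (proj A3 n k) (replicate (fst (proj A3 n k)) x) = x" using k by (auto simp: proj_app)
next
  assume k: "k < n"
  fix a b c :: "nat list"
  assume h: "length a = fst (proj A3 n k) \<and> length b = fst (proj A3 n k) \<and> length c = fst (proj A3 n k) \<and>
       set a \<subseteq> B2 \<and> set b \<subseteq> B2 \<and> set c \<subseteq> B2"
  have sa: "set a \<subseteq> A3" "set b \<subseteq> A3" "set c \<subseteq> A3" using h by auto
  have sx: "set (map (\<lambda>t. (a!t + b!t + c!t) mod 2) [0..<n]) \<subseteq> A3" using aff_set by fastforce
  show "snd (proj A3 n k) (map (\<lambda>t. (a!t + b!t + c!t) mod 2) [0..<fst (proj A3 n k)]) =
        (snd (proj A3 n k) a + snd (proj A3 n k) b + snd (proj A3 n k) c) mod 2"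
    using h k sa sx by (simp add: proj_app)
qed

lemma good_d: assumes i: "i \<in> A3" shows "good (d i)"
  unfolding good_def
proof (intro conjI allI ballI impI)
  fix xs assume h: "length xs = fst (d i) \<and> set xs \<subseteq> B2"
  have x: "xs = [xs!0, xs!1, xs!2]" by (rule len3) (use h in simp)
  have m: "xs!0 \<in> B2" "xs!1 \<in> B2" "xs!2 \<in> B2" using h by - (rule nth_sub; simp)+
  show "snd (d i) xs \<in> B2" using m by (subst x, subst d_eval) (auto simp: dd_B)
next
  fix x :: nat assume "x \<in> B2"
  then show "snd (d i) (replicate (fst (d i)) x) = x"
    by (auto simp: numeral_3_eq_3 d_eval dd_def)
next
  fix a b c :: "nat list"
  assume h: "length a = fst (d i) \<and> length b = fst (d i) \<and> length c = fst (d i) \<and>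
       set a \<subseteq> B2 \<and> set b \<subseteq> B2 \<and> set c \<subseteq> B2"
  have ma: "a!j \<in> B2" "b!j \<in> B2" "c!j \<in> B2" if "j < 3" for j using h that by - (rule nth_sub; simp)+
  have x: "a = [a!0, a!1, a!2]" "b = [b!0, b!1, b!2]" "c = [c!0, c!1, c!2]" by (rule len3, use h in simp)+
  have u: "map (\<lambda>t. (a!t + b!t + c!t) mod 2) [0..<fst (d i)] =
      [(a!0 + b!0 + c!0) mod 2, (a!1 + b!1 + c!1) mod 2, (a!2 + b!2 + c!2) mod 2]"
    by (simp add: numeral_3_eq_3 upt_rec numeral_2_eq_2)
  have B: "\<And>x. x mod 2 \<in> B2" by auto
  have "snd (d i) (map (\<lambda>t. (a!t + b!t + c!t) mod 2) [0..<fst (d i)]) =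
     ((a!0 + b!0 + c!0) mod 2 + (a!1 + b!1 + c!1) mod 2 + (a!2 + b!2 + c!2) mod 2) mod 2"
    unfolding u by (subst d_eval) (auto simp: dd_B[OF B B B])
  also have "\<dots> = ((a!0 + a!1 + a!2) mod 2 + (b!0 + b!1 + b!2) mod 2 + (c!0 + c!1 + c!2) mod 2) mod 2"
    unfolding m3 by (simp add: add_ac)
  also have "\<dots> = (snd (d i) a + snd (d i) b + snd (d i) c) mod 2"
    using h by (simp add: dsum)
  finally show "snd (d i) (map (\<lambda>t. (a!t + b!t + c!t) mod 2) [0..<fst (d i)]) =
     (snd (d i) a + snd (d i) b + snd (d i) c) mod 2" .
qed

lemma good_comp:
  assumes gf: "good f" and lf: "fst f = length gs" and gg: "\<forall>g\<in>set gs. good g \<and> fst g = m"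
  shows "good (compose A3 m f gs)"
  unfolding good_def fst_compose
proof (intro conjI allI ballI impI)
  fix xs assume h: "length xs = m \<and> set xs \<subseteq> B2"
  have v: "snd g xs \<in> B2" if "g \<in> set gs" for g using gg that h good_val[of g xs] by auto
  have s1: "set (map (\<lambda>g. snd g xs) gs) \<subseteq> B2" unfolding set_map image_subset_iff using v by blast
  have l1: "length (map (\<lambda>g. snd g xs) gs) = fst f" using lf by simp
  have "snd f (map (\<lambda>g. snd g xs) gs) \<in> B2"
    using good_val[OF gf l1 s1] .
  moreover have "snd (compose A3 m f gs) xs = snd f (map (\<lambda>g. snd g xs) gs)"
    by (rule compose_app) (use h in auto)
  ultimately show "snd (compose A3 m f gs) xs \<in> B2" by simp
next
  fix x :: nat assume x: "x \<in> B2"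
  have sx: "set (replicate m x) \<subseteq> A3" using x by auto
  have rg: "snd g (replicate m x) = x" if "g \<in> set gs" for g
  proof -
    have "good g" "fst g = m" using gg that by auto
    then show ?thesis using good_rep[OF _ x, of g] by simp
  qed
  have "map (\<lambda>g. snd g (replicate m x)) gs = map (\<lambda>g. x) gs" by (rule map_cong[OF refl]) (rule rg)
  also have "\<dots> = replicate (length gs) x" by (simp add: map_replicate_const)
  finally have "map (\<lambda>g. snd g (replicate m x)) gs = replicate (length gs) x" .
  moreover have "snd (compose A3 m f gs) (replicate m x) = snd f (map (\<lambda>g. snd g (replicate m x)) gs)"
    by (rule compose_app) (use sx in auto)
  moreover have "snd f (replicate (fst f) x) = x" using good_rep[OF gf x] .
  ultimately show "snd (compose A3 m f gs) (replicate m x) = x" using lf by simp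
next
  fix a b c :: "nat list"
  assume h: "length a = m \<and> length b = m \<and> length c = m \<and> set a \<subseteq> B2 \<and> set b \<subseteq> B2 \<and> set c \<subseteq> B2"
  define A where "A = map (\<lambda>g. snd g a) gs"
  define B where "B = map (\<lambda>g. snd g b) gs"
  define C where "C = map (\<lambda>g. snd g c) gs"
  have sx: "set (map (\<lambda>t. (a!t + b!t + c!t) mod 2) [0..<m]) \<subseteq> A3" using aff_set by fastforce
  have lx: "length (map (\<lambda>t. (a!t + b!t + c!t) mod 2) [0..<m]) = m" by simp
  have gv: "snd g (map (\<lambda>t. (a!t + b!t + c!t) mod 2) [0..<m]) = (snd g a + snd g b + snd g c) mod 2"
    if "g \<in> set gs" for g using gg that h good_aff[of g a b c] by auto
  have inB: "snd g a \<in> B2" "snd g b \<in> B2" "snd g c \<in> B2" if "g \<in> set gs" for g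
    using gg that h good_val[of g a] good_val[of g b] good_val[of g c] by auto
  have e: "map (\<lambda>g. snd g (map (\<lambda>t. (a!t + b!t + c!t) mod 2) [0..<m])) gs
      = map (\<lambda>t. (A!t + B!t + C!t) mod 2) [0..<fst f]"
  proof -
    have "map (\<lambda>g. snd g (map (\<lambda>t. (a!t + b!t + c!t) mod 2) [0..<m])) gs
        = map (\<lambda>g. (snd g a + snd g b + snd g c) mod 2) gs"
      by (rule map_cong[OF refl]) (rule gv)
    also have "\<dots> = map (\<lambda>t. (A!t + B!t + C!t) mod 2) [0..<fst f]"
      unfolding A_def B_def C_def lf by (rule nth_equalityI) simp_all
    finally show ?thesis .
  qed
  have sA: "set A \<subseteq> B2" "set B \<subseteq> B2" "set C \<subseteq> B2"
    unfolding A_def B_def C_def set_map image_subset_iff using inB by blast+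
  have lA: "length A = fst f" "length B = fst f" "length C = fst f" unfolding A_def B_def C_def lf by auto
  have "snd f (map (\<lambda>t. (A!t + B!t + C!t) mod 2) [0..<fst f]) = (snd f A + snd f B + snd f C) mod 2"
    using good_aff[OF gf lA sA] .
  then show "snd (compose A3 m f gs) (map (\<lambda>t. (a!t + b!t + c!t) mod 2) [0..<m]) =
        (snd (compose A3 m f gs) a + snd (compose A3 m f gs) b + snd (compose A3 m f gs) c) mod 2"
    unfolding compose_app[OF lx sx] e
  proof -
    have "snd (compose A3 m f gs) a = snd f A" unfolding A_def by (rule compose_app) (use h in auto)
    moreover have "snd (compose A3 m f gs) b = snd f B" unfolding B_def by (rule compose_app) (use h in auto)
    moreover have "snd (compose A3 m f gs) c = snd f C" unfolding C_def by (rule compose_app) (use h in auto)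
    ultimately show "snd f (map (\<lambda>t. (A!t + B!t + C!t) mod 2) [0..<fst f]) =
       (snd (compose A3 m f gs) a + snd (compose A3 m f gs) b + snd (compose A3 m f gs) c) mod 2"
      using \<open>snd f (map (\<lambda>t. (A!t + B!t + C!t) mod 2) [0..<fst f]) = (snd f A + snd f B + snd f C) mod 2\<close> by simp
  qed
qed

lemma clo_good: assumes i: "i \<in> A3" shows "f \<in> clo A3 {d i} \<Longrightarrow> good f"
proof (induction rule: clo.induct)
  case (clo_proj k n)
  then show ?case by (rule good_proj)
next
  case (clo_gen f)
  then show ?case using good_d[OF i] by simp
next
  case (clo_comp f gs m)
  then show ?case using good_comp[of f gs m] by blast
qed



definition xiR :: "op \<Rightarrow> op" where "xiR f = mk_op B2 (fst f) (snd f)"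

lemma fst_minor[simp]: "fst (minor A f r \<sigma>) = r" by (simp add: minor_def)

lemma map_sub: "set xs \<subseteq> S \<Longrightarrow> \<forall>i<n. \<sigma> i < length xs \<Longrightarrow> set (map (\<lambda>i. xs ! \<sigma> i) [0..<n]) \<subseteq> S"
  by (auto intro: nth_sub)

lemma rows_rep: "\<forall>r\<in>set rows. r = [x] \<Longrightarrow> map (\<lambda>r. r ! 0) rows = replicate (length rows) x"
  by (induction rows) auto

lemma xiR_Z2: assumes i: "i \<in> A3" and f: "f \<in> clo A3 {d i}" shows "xiR f \<in> Z2"
proof -
  have g: "good f" by (rule clo_good[OF i f])
  have app: "snd (xiR f) xs = snd f xs" if "length xs = fst f" "set xs \<subseteq> B2" for xs
    unfolding xiR_def using that by (rule mk_op_app)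
  have ops: "xiR f \<in> ops B2"
    unfolding ops_def xiR_def mk_op_def using good_val[OF g] by auto
  have pa: "preserves (xiR f) affine_rel"
    unfolding preserves_def
  proof (intro allI impI)
    fix rows assume h: "length rows = fst (xiR f) \<and> set rows \<subseteq> snd affine_rel"
    define n where "n = fst f"
    have ln: "length rows = n" unfolding n_def using h by (simp add: xiR_def)
    define col where "col j = map (\<lambda>r. r ! j) rows" for j
    have rowf: "\<exists>x y z. rows!t = [x,y,z,(x+y+z) mod 2] \<and> x \<in> B2 \<and> y \<in> B2 \<and> z \<in> B2" if "t < n" for t
    proof -
      have "t < length rows" using that ln by simp
      then have "rows!t \<in> snd affine_rel" by (rule nth_sub[OF conjunct2[OF h]])
      then show ?thesis unfolding aff_mem .
    qed
    have lc: "length (col j) = n" for j unfolding col_def using ln by simp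
    have sc: "set (col j) \<subseteq> B2" if "j < 4" for j
    proof
      fix x assume "x \<in> set (col j)"
      then obtain t where t: "t < n" "x = rows ! t ! j" unfolding col_def using ln by (auto simp: in_set_conv_nth)
      obtain a b c where rt: "rows!t = [a,b,c,(a+b+c) mod 2]" "a \<in> B2" "b \<in> B2" "c \<in> B2" using rowf[OF t(1)] by blast
      have "j < length (rows!t)" using rt(1) that by simp
      then have "x \<in> set (rows!t)" using t(2) by simp
      moreover have "(a+b+c) mod 2 \<in> B2" by auto
      ultimately show "x \<in> B2" using rt by auto
    qed
    have c3: "col 3 = map (\<lambda>t. (col 0 ! t + col 1 ! t + col 2 ! t) mod 2) [0..<n]"
    proof (rule nth_equalityI)
      show "length (col 3) = length (map (\<lambda>t. (col 0 ! t + col 1 ! t + col 2 ! t) mod 2) [0..<n])"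
        using lc by simp
    next
      fix t assume "t < length (col 3)"
      then have t: "t < n" using lc by simp
      obtain a b c where "rows!t = [a,b,c,(a+b+c) mod 2]" using rowf[OF t] by blast
      then show "col 3 ! t = map (\<lambda>t. (col 0 ! t + col 1 ! t + col 2 ! t) mod 2) [0..<n] ! t"
        using t ln unfolding col_def by simp
    qed
    have v: "snd f (col j) \<in> B2" if "j < 4" for j using good_val[OF g] lc sc[OF that] n_def by simp
    have e: "snd f (col 3) = (snd f (col 0) + snd f (col 1) + snd f (col 2)) mod 2"
      unfolding c3 using good_aff[OF g] lc sc n_def by simp
    have "[snd f (col 0), snd f (col 1), snd f (col 2), snd f (col 3)] \<in> snd affine_rel"
      unfolding aff_mem e using v[of 0] v[of 1] v[of 2] by auto
    moreover have "map (\<lambda>j. snd (xiR f) (map (\<lambda>r. r ! j) rows)) [0..<fst affine_rel]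
       = [snd f (col 0), snd f (col 1), snd f (col 2), snd f (col 3)]"
      unfolding fst_aff upt4 col_def[symmetric] using app lc sc n_def by simp
    ultimately show "map (\<lambda>j. snd (xiR f) (map (\<lambda>r. r ! j) rows)) [0..<fst affine_rel] \<in> snd affine_rel"
      by simp
  qed
  have pc: "preserves (xiR f) (1, {[x]})" if x: "x \<in> B2" for x
    unfolding preserves_def
  proof (intro allI impI)
    fix rows assume h: "length rows = fst (xiR f) \<and> set rows \<subseteq> snd (1::nat, {[x]})"
    then have rr: "map (\<lambda>r. r ! 0) rows = replicate (fst f) x" using rows_rep[of rows x]
      by (auto simp: xiR_def)
    have sx: "set (replicate (fst f) x) \<subseteq> B2" using x by auto
    show "map (\<lambda>j. snd (xiR f) (map (\<lambda>r. r ! j) rows)) [0..<fst (1::nat, {[x]})] \<in> snd (1::nat, {[x]})"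
      using app[OF _ sx] good_rep[OF g x] by (simp add: upt1 rr)
  qed
  show ?thesis unfolding Z2_def Pol_def using ops pa pc[of 0] pc[of 1] by simp
qed

lemma xiR_minor:
  assumes s: "\<forall>j<fst f. \<sigma> j < r"
  shows "xiR (minor A3 f r \<sigma>) = minor B2 (xiR f) r \<sigma>"
proof -
  have "xiR (minor A3 f r \<sigma>) = mk_op B2 r (snd (minor A3 f r \<sigma>))" by (simp add: xiR_def)
  also have "\<dots> = mk_op B2 r (\<lambda>xs. snd (xiR f) (map (\<lambda>i. xs ! \<sigma> i) [0..<fst (xiR f)]))"
  proof (rule mk_op_eq)
    fix xs assume l: "length xs = r" and sx: "set xs \<subseteq> B2"
    have m: "set (map (\<lambda>i. xs ! \<sigma> i) [0..<fst f]) \<subseteq> B2" using map_sub[OF sx] s l by simp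
    have "snd (minor A3 f r \<sigma>) xs = snd f (map (\<lambda>i. xs ! \<sigma> i) [0..<fst f])"
      unfolding minor_def using l B2_A3[OF sx] by (rule mk_op_app)
    also have "\<dots> = snd (xiR f) (map (\<lambda>i. xs ! \<sigma> i) [0..<fst f])"
      unfolding xiR_def using m by (simp add: mk_op_app)
    finally show "snd (minor A3 f r \<sigma>) xs = snd (xiR f) (map (\<lambda>i. xs ! \<sigma> i) [0..<fst (xiR f)])"
      by (simp add: xiR_def)
  qed
  also have "\<dots> = minor B2 (xiR f) r \<sigma>" by (simp add: minor_def)
  finally show ?thesis .
qed



definition Sf :: "op \<Rightarrow> nat set" where
  "Sf f = {j. j < fst f \<and> snd f (unitv (fst f) j) = 1}"

definition xiZ :: "nat \<Rightarrow> op \<Rightarrow> op" where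
  "xiZ i f = mk_op A3 (fst f) (\<lambda>xs. res i (odd (card {j\<in>Sf f. xs!j = 0}))
      (odd (card {j\<in>Sf f. xs!j = 1})) (odd (card {j\<in>Sf f. xs!j = 2})))"

lemma Sf_sub: "Sf f \<subseteq> {..<fst f}" by (auto simp: Sf_def)
lemma Sf_fin: "finite (Sf f)" using Sf_sub finite_subset by blast

lemma map_nth_sub: "set xs \<subseteq> S \<Longrightarrow> \<forall>j\<in>set js. j < length xs \<Longrightarrow> set (map ((!) xs) js) \<subseteq> S"
  by (auto intro: nth_sub)

lemma coll_insert: "{j \<in> insert a S. P j} = (if P a then insert a {j\<in>S. P j} else {j\<in>S. P j})"
  by auto

lemma count_map_distinct: "distinct js \<Longrightarrow> count_list (map g js) v = card {j\<in>set js. g j = v}"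
proof (induction js)
  case Nil then show ?case by simp
next
  case (Cons a js)
  then have na: "a \<notin> {j\<in>set js. g j = v}" and IH: "count_list (map g js) v = card {j\<in>set js. g j = v}" by auto
  show ?case unfolding list.set coll_insert using IH na by auto
qed

lemma unit_val: "f \<in> Z2 \<Longrightarrow> j < fst f \<Longrightarrow> snd f (unitv (fst f) j) \<in> B2"
  using Z2_val unitv_len unitv_set by blast

lemma odd_B2: "v \<in> B2 \<Longrightarrow> odd v \<longleftrightarrow> v = 1" by auto

lemma Sf_odd: assumes f: "f \<in> Z2" shows "odd (card (Sf f))"
proof -
  define n where "n = fst f"
  have r1: "snd f (replicate n 1) = 1" using Z2_rep[OF f, of 1] n_def by simp
  have sr: "set (replicate n (1::nat)) \<subseteq> B2" by (cases n) auto
  have "snd f (replicate n 1) = (\<Sum>j<n. replicate n 1 ! j * snd f (unitv n j)) mod 2"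
    using Z2_lin[OF f, of "replicate n 1"] sr n_def by simp
  also have "\<dots> = (\<Sum>j<n. snd f (unitv n j)) mod 2" by (rule arg_cong[where f="\<lambda>x. x mod 2"], rule sum.cong) auto
  finally have "odd (\<Sum>j<n. snd f (unitv n j))" using r1 by presburger
  then have "odd (card {j\<in>{..<n}. odd (snd f (unitv n j))})" using even_sum_iff[of "{..<n}" "\<lambda>j. snd f (unitv n j)"] by simp
  moreover have "{j\<in>{..<n}. odd (snd f (unitv n j))} = Sf f"
    unfolding Sf_def n_def using unit_val[OF f] odd_B2 by auto
  ultimately show ?thesis by simp
qed

lemma xiZ_clo: assumes f: "f \<in> Z2" and i: "i \<in> A3" shows "xiZ i f \<in> clo A3 {d i}"
proof -
  define n where "n = fst f"
  define k where "k = card (Sf f)"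
  define js where "js = sorted_list_of_set (Sf f)"
  have dj: "distinct js" and sj: "set js = Sf f" and lj: "length js = k"
    unfolding js_def k_def using Sf_fin by auto
  have jn: "\<forall>j\<in>set js. j < n" using sj Sf_sub[of f] n_def by auto
  obtain q where q: "k = 2*q+1" using Sf_odd[OF f] k_def oddE by blast
  have Mc: "Mop i k \<in> clo A3 {d i}" using MEop_clo[OF i, of q] q by simp
  have eq: "xiZ i f = compose A3 n (Mop i k) (map (proj A3 n) js)"
    unfolding xiZ_def compose_def n_def[symmetric]
  proof (rule mk_op_eq)
    fix xs assume l: "length xs = n" and s: "set xs \<subseteq> A3"
    have ly: "length (map ((!) xs) js) = k" using lj by simp
    have sy: "set (map ((!) xs) js) \<subseteq> A3" using map_nth_sub[OF s] jn l by simp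
    have c: "count_list (map ((!) xs) js) v = card {j\<in>Sf f. xs!j = v}" for v
      using count_map_distinct[OF dj] sj by simp
    show "res i (odd (card {j\<in>Sf f. xs!j = 0})) (odd (card {j\<in>Sf f. xs!j = 1})) (odd (card {j\<in>Sf f. xs!j = 2}))
        = snd (Mop i k) (map (\<lambda>g. snd g xs) (map (proj A3 n) js))"
      unfolding map_projs[OF l s] Mop_def mk_op_app[OF ly sy] Mfun_def par_def c ..
  qed
  show ?thesis unfolding eq
    by (rule clo_comp[OF Mc]) (use lj jn in \<open>auto simp: Mop_def intro: clo_proj\<close>)
qed

lemma mod2_eq1: "((x::nat) mod 2 = 1) \<longleftrightarrow> odd x" by presburger

lemma Sf_minor:
  assumes f: "f \<in> Z2" and s: "\<forall>j<fst f. \<sigma> j < r"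
  shows "Sf (minor B2 f r \<sigma>) = {k. k < r \<and> odd (card {j\<in>Sf f. \<sigma> j = k})}"
proof -
  define n where "n = fst f"
  have key: "snd (minor B2 f r \<sigma>) (unitv r k) = 1 \<longleftrightarrow> odd (card {j\<in>Sf f. \<sigma> j = k})" if k: "k < r" for k
  proof -
    define w where "w = map (\<lambda>j. unitv r k ! \<sigma> j) [0..<n]"
    have lw: "length w = fst f" unfolding w_def n_def by simp
    have wj: "w ! j = (if \<sigma> j = k then 1 else 0)" if "j < n" for j
      unfolding w_def using that s n_def by (simp add: unitv_nth)
    have sw: "set w \<subseteq> B2"
    proof
      fix x assume "x \<in> set w"
      then obtain j where "j < n" "x = w ! j" using lw n_def by (auto simp: in_set_conv_nth)
      then show "x \<in> B2" using wj by simp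
    qed
    have "snd (minor B2 f r \<sigma>) (unitv r k) = snd f w"
      unfolding minor_def w_def n_def using unitv_len unitv_set by (rule mk_op_app)
    also have "\<dots> = (\<Sum>j<n. w!j * snd f (unitv n j)) mod 2" using Z2_lin[OF f lw sw] n_def by simp
    also have "\<dots> = (\<Sum>j<n. if \<sigma> j = k then snd f (unitv n j) else 0) mod 2"
      by (rule arg_cong[where f="\<lambda>x. x mod 2"], rule sum.cong) (auto simp: wj)
    finally have e: "snd (minor B2 f r \<sigma>) (unitv r k) = (\<Sum>j<n. if \<sigma> j = k then snd f (unitv n j) else 0) mod 2" .
    have "odd (\<Sum>j<n. if \<sigma> j = k then snd f (unitv n j) else 0) \<longleftrightarrow>
          odd (card {j\<in>{..<n}. odd (if \<sigma> j = k then snd f (unitv n j) else 0)})"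
      using even_sum_iff[of "{..<n}" "\<lambda>j. if \<sigma> j = k then snd f (unitv n j) else 0"] by simp
    moreover have "{j\<in>{..<n}. odd (if \<sigma> j = k then snd f (unitv n j) else 0)} = {j\<in>Sf f. \<sigma> j = k}"
      unfolding Sf_def n_def using unit_val[OF f] odd_B2 by auto
    ultimately show ?thesis unfolding e mod2_eq1 by simp
  qed
  show ?thesis unfolding Sf_def[of "minor B2 f r \<sigma>"] fst_minor using key by auto
qed

lemma par_group:
  assumes fin: "finite S" and s: "\<forall>j\<in>S. \<sigma> j < r"
  shows "odd (card {j\<in>S. xs ! (\<sigma> j) = v}) \<longleftrightarrow>
         odd (card {k. k < r \<and> odd (card {j\<in>S. \<sigma> j = k}) \<and> xs ! k = v})"
proof -
  define T where "T = {k. k < r \<and> xs ! k = v}"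
  define S' where "S' = {j\<in>S. xs ! (\<sigma> j) = v}"
  have fT: "finite T" unfolding T_def by simp
  have fS': "finite S'" unfolding S'_def using fin by simp
  have im: "\<sigma> ` S' \<subseteq> T" unfolding S'_def T_def using s by auto
  have "card S' = (\<Sum>y\<in>T. card {x\<in>S'. \<sigma> x = y})"
    using sum.group[OF fS' fT im, of "\<lambda>_. 1::nat"] by simp
  also have "\<dots> = (\<Sum>y\<in>T. card {j\<in>S. \<sigma> j = y})"
    by (rule sum.cong[OF refl]) (auto simp: S'_def T_def intro!: arg_cong[where f=card])
  finally have "even (card S') \<longleftrightarrow> even (card {y\<in>T. odd (card {j\<in>S. \<sigma> j = y})})"
    using even_sum_iff[OF fT, of "\<lambda>y. card {j\<in>S. \<sigma> j = y}"] by simp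
  moreover have "{y\<in>T. odd (card {j\<in>S. \<sigma> j = y})} = {k. k < r \<and> odd (card {j\<in>S. \<sigma> j = k}) \<and> xs ! k = v}"
    unfolding T_def by auto
  ultimately show ?thesis unfolding S'_def by simp
qed

lemma xiZ_minor:
  assumes f: "f \<in> Z2" and s: "\<forall>j<fst f. \<sigma> j < r"
  shows "xiZ i (minor B2 f r \<sigma>) = minor A3 (xiZ i f) r \<sigma>"
proof -
  define n where "n = fst f"
  have sS: "\<forall>j\<in>Sf f. \<sigma> j < r" using s Sf_sub[of f] by auto
  have "xiZ i (minor B2 f r \<sigma>) = mk_op A3 r (\<lambda>xs. res i (odd (card {j\<in>Sf (minor B2 f r \<sigma>). xs!j = 0}))
      (odd (card {j\<in>Sf (minor B2 f r \<sigma>). xs!j = 1})) (odd (card {j\<in>Sf (minor B2 f r \<sigma>). xs!j = 2})))"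
    by (simp add: xiZ_def)
  also have "\<dots> = mk_op A3 r (\<lambda>xs. snd (xiZ i f) (map (\<lambda>j. xs ! \<sigma> j) [0..<fst (xiZ i f)]))"
  proof (rule mk_op_eq)
    fix xs assume l: "length xs = r" and sx: "set xs \<subseteq> A3"
    define ys where "ys = map (\<lambda>j. xs ! \<sigma> j) [0..<n]"
    have ly: "length ys = fst f" unfolding ys_def n_def by simp
    have sy: "set ys \<subseteq> A3" unfolding ys_def using map_sub[OF sx] s l n_def by simp
    have c: "{j\<in>Sf f. ys ! j = v} = {j\<in>Sf f. xs ! (\<sigma> j) = v}" for v
      unfolding ys_def using Sf_sub[of f] n_def by auto
    have p: "odd (card {j\<in>Sf (minor B2 f r \<sigma>). xs!j = v}) \<longleftrightarrow> odd (card {j\<in>Sf f. ys ! j = v})" for v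
      unfolding c Sf_minor[OF f s] par_group[OF Sf_fin sS]
      by (rule arg_cong[where f="\<lambda>x. odd (card x)"]) auto
    have "snd (xiZ i f) ys = res i (odd (card {j\<in>Sf f. ys!j = 0}))
      (odd (card {j\<in>Sf f. ys!j = 1})) (odd (card {j\<in>Sf f. ys!j = 2}))"
      unfolding xiZ_def using ly sy by (rule mk_op_app)
    then show "res i (odd (card {j\<in>Sf (minor B2 f r \<sigma>). xs!j = 0}))
      (odd (card {j\<in>Sf (minor B2 f r \<sigma>). xs!j = 1})) (odd (card {j\<in>Sf (minor B2 f r \<sigma>). xs!j = 2}))
      = snd (xiZ i f) (map (\<lambda>j. xs ! \<sigma> j) [0..<fst (xiZ i f)])"
      unfolding p by (simp add: ys_def n_def xiZ_def)
  qed
  also have "\<dots> = minor A3 (xiZ i f) r \<sigma>" by (simp add: minor_def)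
  finally show ?thesis .
qed

theorem lemma7p1:
  fixes i :: nat
  assumes "i \<in> {0, 1, 2}"
  shows "minion_equiv {0, 1} Z2 {0, 1, 2} (clo {0, 1, 2} {d i})"
proof -
  have h1: "minion_hom B2 Z2 A3 (clo A3 {d i}) (xiZ i)"
    unfolding minion_hom_def
    using xiZ_clo[OF _ assms] xiZ_minor by (simp add: xiZ_def)
  have h2: "minion_hom A3 (clo A3 {d i}) B2 Z2 xiR"
    unfolding minion_hom_def
    using xiR_Z2[OF assms] xiR_minor by (simp add: xiR_def)
  show ?thesis unfolding minion_equiv_def using h1 h2 by blast
qed


end
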